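(* Let $r\in(0,\pi/2)$. There exist $\varepsilon=\varepsilon(r)>0$ and $c=c(r)>0$ with the following property. Let $h\in S^2_+\cap E_r(S^1)$, and let $\eta\in L^2_0(\mathbb{R})$ and $f\in E(S^1)$ satisfy $\max\{\|f-h\|_\infty,\|\eta\|_\infty\}\le\varepsilon$. Then \[ \int_0^\pi\int_\alpha^\pi p_{\alpha,\beta}(f)\sin(\Delta^h_{\alpha,\beta}+\Delta^\eta_{\alpha,\beta})(\Delta^v_{\alpha,\beta})^2\,d\beta\,d\alpha\ge c\|v\|_2^2 \] for all $v\in L^2_0(\mathbb{R})$.
   Context: $E(S^1)$ is the set of $1$-Lipschitz $f:\mathbb{R}\to\mathbb{R}$ (write $f_\alpha=f(\alpha)$) with $f_{\alpha+\pi}+f_\alpha=\pi$ for all $\alpha$, with the sup norm. $S^1\subset E(S^1)$ is the set of functions $\alpha\mapsto\arccos(\cos(\alpha-\tau))$. $S^2_+\subset E(S^1)$ is the set of functions $\alpha\mapsto\arccos(\cos(d)\cos(\alpha-\tau))$ with $\tau\in\mathbb{R}$, $d\in[0,\pi/2]$. $E_r(S^1)=\{f\in E(S^1):f_\alpha\in[r,\pi-r]\ \forall\alpha\}$. For $f\in E(S^1)\setminus S^1$ (values in $(0,\pi)$) and $\beta-\alpha\notin\pi\mathbb{Z}$, \[ p_{\alpha,\beta}(f)=\frac{1-\cos(\beta-\alpha)^2-\cos(f_\alpha)^2-\cos(f_\beta)^2+2\cos(\beta-\alpha)\cos(f_\alpha)\cos(f_\beta)}{\sin(\beta-\alpha)^2\sin(f_\alpha)^2\sin(f_\beta)^2}.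 \] For $h_\alpha=\arccos(\cos(d)\cos(\alpha-\tau))$ in $S^2_+\setminus S^1$, let $p_\alpha(h)=\sin(d)/\sin(h_\alpha)^2$. Let $\nu_h:\mathbb{R}\to\mathbb{R}$ be the unique Lipschitz function with $\nu_h(0)=0$ and $\nu_h'(\alpha)=p_\alpha(h)$. Set $\Delta^h_{\alpha,\beta}=\nu_h(\beta)-\nu_h(\alpha)$ and $\Delta^\eta_{\alpha,\beta}=\eta(\beta)-\eta(\alpha)$. $L^2_0(\mathbb{R})$ is the space of $\pi$-periodic $\eta\in L^2_{\rm loc}(\mathbb{R})$ with $\int_0^\pi\eta=0$, with norm $\|\eta\|_2^2=\pi\int_0^\pi\eta(t)^2\,dt$. *)

theory Defs
  imports "HOL-Analysis.Analysis"
begin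

definition E_S1 :: "(real \<Rightarrow> real) set" where
  "E_S1 = {f. lipschitz_on 1 UNIV f \<and> (\<forall>a. f (a + pi) + f a = pi)}"

definition S1 :: "(real \<Rightarrow> real) set" where
  "S1 = {f. \<exists>\<tau>. f = (\<lambda>a. arccos (cos (a - \<tau>)))}"

definition S2_plus :: "(real \<Rightarrow> real) set" where
  "S2_plus = {h. \<exists>\<tau> d. d \<in> {0..pi/2} \<and> h = (\<lambda>a. arccos (cos d * cos (a - \<tau>)))}"

definition E_r :: "real \<Rightarrow> (real \<Rightarrow> real) set" where
  "E_r r = {f \<in> E_S1. \<forall>a. f a \<in> {r..pi - r}}"

definition p2 :: "(real \<Rightarrow> real) \<Rightarrow> real \<Rightarrow> real \<Rightarrow> real" where
  "p2 f a b =
     (1 - cos (b - a) ^ 2 - cos (f a) ^ 2 - cos (f b) ^ 2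
        + 2 * cos (b - a) * cos (f a) * cos (f b))
     / (sin (b - a) ^ 2 * sin (f a) ^ 2 * sin (f b) ^ 2)"

text \<open>The parameter d of h in S^2_+ (uniquely determined by h).\<close>
definition hd :: "(real \<Rightarrow> real) \<Rightarrow> real" where
  "hd h = (THE d. d \<in> {0..pi/2} \<and> (\<exists>\<tau>. h = (\<lambda>a. arccos (cos d * cos (a - \<tau>)))))"

definition p1 :: "(real \<Rightarrow> real) \<Rightarrow> real \<Rightarrow> real" where
  "p1 h a = sin (hd h) / sin (h a) ^ 2"

definition nu :: "(real \<Rightarrow> real) \<Rightarrow> real \<Rightarrow> real" where
  "nu h = (THE \<nu>. (\<exists>L. lipschitz_on L UNIV \<nu>) \<and> \<nu> 0 = 0 \<and>
                   (\<forall>a. (\<nu> has_real_derivative p1 h a) (at a)))"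

definition L2_0 :: "(real \<Rightarrow> real) set" where
  "L2_0 = {\<eta>. \<eta> \<in> borel_measurable lborel \<and> (\<forall>t. \<eta> (t + pi) = \<eta> t) \<and>
              set_integrable lborel {0..pi} (\<lambda>t. (\<eta> t)\<^sup>2) \<and>
              (LBINT t:{0..pi}. \<eta> t) = 0}"

definition L2norm :: "(real \<Rightarrow> real) \<Rightarrow> real" where
  "L2norm \<eta> = sqrt (pi * (LBINT t:{0..pi}. (\<eta> t)\<^sup>2))"

end

theory Submission
  imports Defs
begin

definition Gf :: "real \<Rightarrow> real \<Rightarrow> real" where
  "Gf s u = u + arctan ((1 - s) * sin u * cos u / (s * (cos u)\<^sup>2 + (sin u)\<^sup>2))"

lemma Gf_den_pos: fixes s u :: real assumes "0 < s" "s \<le> 1" shows "s * (cos u)\<^sup>2 + (sin u)\<^sup>2 > 0"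
proof -
  have "0 \<le> (1 - s) * (sin u)\<^sup>2" using assms by (intro mult_nonneg_nonneg) auto
  then have "s * (cos u)\<^sup>2 + (sin u)\<^sup>2 \<ge> s * (cos u)\<^sup>2 + s * (sin u)\<^sup>2"
    by (simp add: algebra_simps)
  moreover have "s * (cos u)\<^sup>2 + s * (sin u)\<^sup>2 = s" by (simp add: distrib_left[symmetric])
  ultimately show ?thesis using assms by simp
qed

lemma Gf_deriv: fixes s u :: real assumes "0 < s" "s \<le> 1"
  shows "(Gf s has_real_derivative s / (s\<^sup>2 * (cos u)\<^sup>2 + (sin u)\<^sup>2)) (at u)"
proof -
  define c where "c = cos u"
  define S where "S = sin u"
  have cS: "c\<^sup>2 + S\<^sup>2 = 1" unfolding c_def S_def by simp
  have D: "s * c\<^sup>2 + S\<^sup>2 > 0" using Gf_den_pos[OF assms] unfolding c_def S_def .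
  have E: "s\<^sup>2 * c\<^sup>2 + S\<^sup>2 > 0" using Gf_den_pos[of "s\<^sup>2"] assms unfolding c_def S_def
    by (simp add: power_le_one)
  have dN: "((\<lambda>u. (1-s) * sin u * cos u) has_real_derivative (1-s) * (cos u * cos u - sin u * sin u)) (at u)"
    by (auto intro!: derivative_eq_intros simp: algebra_simps)
  have dD: "((\<lambda>u. s * (cos u)\<^sup>2 + (sin u)\<^sup>2) has_real_derivative 2 * (1-s) * sin u * cos u) (at u)"
    by (auto intro!: derivative_eq_intros simp: algebra_simps power2_eq_square)
  have dq: "((\<lambda>u. (1-s) * sin u * cos u / (s * (cos u)\<^sup>2 + (sin u)\<^sup>2)) has_real_derivative
      (((1-s) * (cos u * cos u - sin u * sin u)) * (s * (cos u)\<^sup>2 + (sin u)\<^sup>2) - ((1-s) * sin u * cos u) * (2 * (1-s) * sin u * cos u))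
        / ((s * (cos u)\<^sup>2 + (sin u)\<^sup>2) * (s * (cos u)\<^sup>2 + (sin u)\<^sup>2))) (at u)"
    by (rule DERIV_divide[OF dN dD]) (use Gf_den_pos[OF assms, of u] in simp)
  define q where "q = (1-s) * S * c / (s * c\<^sup>2 + S\<^sup>2)"
  have da: "((\<lambda>u. arctan ((1-s) * sin u * cos u / (s * (cos u)\<^sup>2 + (sin u)\<^sup>2))) has_real_derivative
      inverse (1 + q\<^sup>2) * ((((1-s) * (c * c - S * S)) * (s * c\<^sup>2 + S\<^sup>2) - ((1-s) * S * c) * (2 * (1-s) * S * c))
        / ((s * c\<^sup>2 + S\<^sup>2) * (s * c\<^sup>2 + S\<^sup>2)))) (at u)"
    using DERIV_chain2[OF DERIV_arctan dq] unfolding q_def c_def S_def by simp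
  have key1: "(s * c\<^sup>2 + S\<^sup>2)\<^sup>2 + ((1-s) * S * c)\<^sup>2 = (s\<^sup>2 * c\<^sup>2 + S\<^sup>2)"
  proof -
    have "(s * c\<^sup>2 + S\<^sup>2)\<^sup>2 + ((1-s) * S * c)\<^sup>2 = (s\<^sup>2 * c\<^sup>2 + S\<^sup>2) * (c\<^sup>2 + S\<^sup>2)"
      by (simp add: algebra_simps power2_eq_square)
    then show ?thesis using cS by simp
  qed
  have key2: "(s\<^sup>2 * c\<^sup>2 + S\<^sup>2) + (((1 - s) * (c * c - S * S)) * (s * c\<^sup>2 + S\<^sup>2) - ((1 - s) * S * c) * (2 * (1 - s) * S * c)) = s"
    using cS by algebra
  define X where "X = (((1 - s) * (c * c - S * S)) * (s * c\<^sup>2 + S\<^sup>2) - ((1 - s) * S * c) * (2 * (1 - s) * S * c))"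
  define Dn where "Dn = s * c\<^sup>2 + S\<^sup>2"
  define En where "En = s\<^sup>2 * c\<^sup>2 + S\<^sup>2"
  have Dn: "Dn > 0" "En > 0" using D E unfolding Dn_def En_def by auto
  have q1: "1 + q\<^sup>2 = En / Dn\<^sup>2"
    unfolding q_def En_def Dn_def using D key1 by (simp add: field_simps)
  have k2: "En + X = s" using key2 unfolding En_def X_def .
  have "1 + inverse (1 + q\<^sup>2) * (X / (Dn * Dn)) = 1 + X / En"
    unfolding q1 using Dn by (simp add: field_simps power2_eq_square)
  also have "\<dots> = s / En" using Dn k2 by (simp add: field_simps)
  finally have eq: "1 + inverse (1 + q\<^sup>2) * (X / (Dn * Dn)) = s / En" .
  have "(Gf s has_real_derivative 1 + inverse (1 + q\<^sup>2) * (X / (Dn * Dn))) (at u)"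
    unfolding Gf_def[abs_def] X_def Dn_def by (rule DERIV_add[OF DERIV_ident da])
  then show ?thesis unfolding eq En_def c_def S_def .
qed

lemma Gf_period: "Gf s (u + pi) = Gf s u + pi"
  unfolding Gf_def by simp

lemma Eden_bounds: fixes s u :: real assumes "0 < s" "s \<le> 1"
  shows "s\<^sup>2 \<le> s\<^sup>2 * (cos u)\<^sup>2 + (sin u)\<^sup>2" "s\<^sup>2 * (cos u)\<^sup>2 + (sin u)\<^sup>2 \<le> 1"
proof -
  have s2: "s\<^sup>2 \<le> 1" using assms by (simp add: power_le_one)
  have "s\<^sup>2 * (sin u)\<^sup>2 \<le> 1 * (sin u)\<^sup>2" using s2 by (intro mult_right_mono) auto
  moreover have "s\<^sup>2 * (cos u)\<^sup>2 + s\<^sup>2 * (sin u)\<^sup>2 = s\<^sup>2" by (simp add: distrib_left[symmetric])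
  ultimately show "s\<^sup>2 \<le> s\<^sup>2 * (cos u)\<^sup>2 + (sin u)\<^sup>2" by linarith
  have "s\<^sup>2 * (cos u)\<^sup>2 \<le> 1 * (cos u)\<^sup>2" using s2 by (intro mult_right_mono) auto
  then show "s\<^sup>2 * (cos u)\<^sup>2 + (sin u)\<^sup>2 \<le> 1" using sin_cos_squared_add[of u] by linarith
qed

lemma deriv_bounds:
  fixes g g' :: "real \<Rightarrow> real"
  assumes "\<And>x. (g has_real_derivative g' x) (at x)" "\<And>x. m \<le> g' x" "\<And>x. g' x \<le> M" "a \<le> b"
  shows "m * (b - a) \<le> g b - g a" "g b - g a \<le> M * (b - a)"
proof -
  have "m * (b - a) \<le> g b - g a \<and> g b - g a \<le> M * (b - a)"
  proof (cases "a = b")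
    case True then show ?thesis by simp
  next
    case False
    then have "a < b" using assms by simp
    then obtain z where "g b - g a = (b - a) * g' z" using MVT2[of a b g g'] assms(1) by blast
    moreover have "m * (b - a) \<le> (b - a) * g' z" "(b - a) * g' z \<le> M * (b - a)"
      using assms(2)[of z] assms(3)[of z] \<open>a < b\<close> by (simp_all add: mult.commute mult_left_mono)
    ultimately show ?thesis by simp
  qed
  then show "m * (b - a) \<le> g b - g a" "g b - g a \<le> M * (b - a)" by auto
qed

lemma arccos_ge_d: fixes d u :: real assumes "0 \<le> d" "d \<le> pi/2"
  shows "d \<le> arccos (cos d * cos u)"
proof -
  have c0: "0 \<le> cos d" using assms by (intro cos_ge_zero) auto
  have c1: "cos d \<le> 1" by simp
  have "cos d * cos u \<le> cos d * 1" using c0 by (intro mult_left_mono) auto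
  moreover have "- 1 \<le> cos d * cos u"
  proof -
    have "\<bar>cos d * cos u\<bar> \<le> 1" by (simp add: abs_mult mult_le_one)
    then show ?thesis by linarith
  qed
  ultimately have "arccos (cos d) \<le> arccos (cos d * cos u)" by (intro arccos_le_arccos) auto
  then show ?thesis using arccos_cos[of d] assms by simp
qed

lemma hd_eq: fixes d \<tau> :: real
  assumes "d \<in> {0..pi/2}" "h = (\<lambda>a. arccos (cos d * cos (a - \<tau>)))"
  shows "hd h = d"
  unfolding hd_def
proof (rule the_equality)
  show "d \<in> {0..pi/2} \<and> (\<exists>\<tau>. h = (\<lambda>a. arccos (cos d * cos (a - \<tau>))))" using assms by blast
next
  fix d' assume "d' \<in> {0..pi/2} \<and> (\<exists>\<tau>. h = (\<lambda>a. arccos (cos d' * cos (a - \<tau>))))"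
  then obtain \<tau>' where d': "d' \<in> {0..pi/2}" and h': "h = (\<lambda>a. arccos (cos d' * cos (a - \<tau>')))" by blast
  have "h \<tau> = d" using assms arccos_cos[of d] by simp
  moreover have "d' \<le> h \<tau>" using h' arccos_ge_d[of d'] d' by simp
  moreover have "h \<tau>' = d'" using h' d' arccos_cos[of d'] by simp
  moreover have "d \<le> h \<tau>'" using assms arccos_ge_d[of d] by simp
  ultimately show "d' = d" by linarith
qed

lemma sin_arccos_sq: fixes x :: real assumes "\<bar>x\<bar> \<le> 1" shows "(sin (arccos x))\<^sup>2 = 1 - x\<^sup>2"
proof -
  have "x\<^sup>2 \<le> 1" using assms by (simp add: abs_le_square_iff[of x 1, simplified])
  then show ?thesis using assms by (simp add: sin_arccos)
qed

definition nuE :: "real \<Rightarrow> real \<Rightarrow> real \<Rightarrow> real" where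
  "nuE s \<tau> t = Gf s (t - \<tau>) - Gf s (- \<tau>)"

lemma nuE_deriv: fixes s :: real assumes "0 < s" "s \<le> 1"
  shows "(nuE s \<tau> has_real_derivative s / (s\<^sup>2 * (cos (t - \<tau>))\<^sup>2 + (sin (t - \<tau>))\<^sup>2)) (at t)"
proof -
  have "((\<lambda>t. Gf s (t - \<tau>)) has_real_derivative s / (s\<^sup>2 * (cos (t - \<tau>))\<^sup>2 + (sin (t - \<tau>))\<^sup>2) * 1) (at t)"
    by (rule DERIV_chain2[OF Gf_deriv[OF assms]]) (auto intro!: derivative_eq_intros)
  then have "((\<lambda>t. Gf s (t - \<tau>) - Gf s (- \<tau>)) has_real_derivative s / (s\<^sup>2 * (cos (t - \<tau>))\<^sup>2 + (sin (t - \<tau>))\<^sup>2) - 0) (at t)"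
    by (intro DERIV_diff) auto
  then show ?thesis unfolding nuE_def[abs_def] by simp
qed

lemma h_facts:
  assumes r: "0 < r" "r < pi/2" and h: "h \<in> S2_plus \<inter> E_r r"
  obtains \<tau> d where "d \<in> {r..pi/2}" "h = (\<lambda>a. arccos (cos d * cos (a - \<tau>)))"
    "nu h = nuE (sin d) \<tau>"
    "\<And>a. p1 h a = sin d / ((sin d)\<^sup>2 * (cos (a - \<tau>))\<^sup>2 + (sin (a - \<tau>))\<^sup>2)"
proof -
  obtain \<tau> d where d: "d \<in> {0..pi/2}" and hh: "h = (\<lambda>a. arccos (cos d * cos (a - \<tau>)))"
    using h unfolding S2_plus_def by blast
  have "h \<tau> \<in> {r..pi - r}" using h unfolding E_r_def by blast
  moreover have "h \<tau> = d" using hh d arccos_cos[of d] by simp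
  ultimately have dr: "d \<in> {r..pi/2}" using d by auto
  define s where "s = sin d"
  have s0: "0 < s" using dr r unfolding s_def by (intro sin_gt_zero) auto
  have s1: "s \<le> 1" unfolding s_def by simp
  have hdd: "hd h = d" using hd_eq[OF d hh] .
  have p1: "p1 h a = s / (s\<^sup>2 * (cos (a - \<tau>))\<^sup>2 + (sin (a - \<tau>))\<^sup>2)" for a
  proof -
    have ab: "\<bar>cos d * cos (a - \<tau>)\<bar> \<le> 1" by (simp add: abs_mult mult_le_one)
    have "(sin (h a))\<^sup>2 = 1 - (cos d)\<^sup>2 * (cos (a - \<tau>))\<^sup>2"
      using sin_arccos_sq[OF ab] hh by (simp add: power_mult_distrib)
    also have "\<dots> = s\<^sup>2 * (cos (a - \<tau>))\<^sup>2 + (sin (a - \<tau>))\<^sup>2"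
    proof -
      have A: "(cos d)\<^sup>2 = 1 - s\<^sup>2" unfolding s_def by (simp add: cos_squared_eq)
      have B: "(sin (a - \<tau>))\<^sup>2 = 1 - (cos (a - \<tau>))\<^sup>2" by (simp add: sin_squared_eq)
      show ?thesis unfolding A B by (simp add: algebra_simps)
    qed
    finally show ?thesis unfolding p1_def hdd s_def by simp
  qed
  have nu: "nu h = nuE s \<tau>"
    unfolding nu_def
  proof (rule the_equality)
    have der: "\<And>t. (nuE s \<tau> has_real_derivative p1 h t) (at t)"
      unfolding p1 by (rule nuE_deriv[OF s0 s1])
    have bnd: "\<And>t. 0 \<le> p1 h t" "\<And>t. p1 h t \<le> 1 / s"
    proof -
      fix t
      have E: "s\<^sup>2 \<le> s\<^sup>2 * (cos (t - \<tau>))\<^sup>2 + (sin (t - \<tau>))\<^sup>2" using Eden_bounds[OF s0 s1] by blast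
      have Ep: "0 < s\<^sup>2 * (cos (t - \<tau>))\<^sup>2 + (sin (t - \<tau>))\<^sup>2" using E s0 by (smt (verit) zero_less_power)
      show "0 \<le> p1 h t" unfolding p1 using Ep s0 by simp
      have "s / (s\<^sup>2 * (cos (t - \<tau>))\<^sup>2 + (sin (t - \<tau>))\<^sup>2) \<le> s / s\<^sup>2"
        using E s0 Ep by (intro divide_left_mono) auto
      then show "p1 h t \<le> 1 / s" unfolding p1 using s0 by (simp add: power2_eq_square)
    qed
    have "lipschitz_on (1/s) UNIV (nuE s \<tau>)"
    proof (rule lipschitz_onI)
      fix x y :: real
      show "dist (nuE s \<tau> x) (nuE s \<tau> y) \<le> 1 / s * dist x y"
      proof (cases "x \<le> y")
        case True
        from deriv_bounds[OF der bnd True] True show ?thesis by (simp add: dist_real_def abs_if)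
      next
        case False
        then have "y \<le> x" by simp
        from deriv_bounds[OF der bnd this] \<open>y \<le> x\<close> show ?thesis by (simp add: dist_real_def abs_if)
      qed
    qed (use s0 in simp)
    then show "(\<exists>L. lipschitz_on L UNIV (nuE s \<tau>)) \<and> nuE s \<tau> 0 = 0 \<and>
       (\<forall>a. (nuE s \<tau> has_real_derivative p1 h a) (at a))"
      using der by (auto simp: nuE_def)
  next
    fix \<nu> assume a: "(\<exists>L. lipschitz_on L UNIV \<nu>) \<and> \<nu> 0 = 0 \<and> (\<forall>a. (\<nu> has_real_derivative p1 h a) (at a))"
    have "\<forall>x. ((\<lambda>t. \<nu> t - nuE s \<tau> t) has_real_derivative p1 h x - p1 h x) (at x)"
    proof
      fix x
      show "((\<lambda>t. \<nu> t - nuE s \<tau> t) has_real_derivative p1 h x - p1 h x) (at x)"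
        using a by (intro DERIV_diff) (auto simp: p1 intro: nuE_deriv[OF s0 s1])
    qed
    then have "\<And>x. (\<lambda>t. \<nu> t - nuE s \<tau> t) x = (\<lambda>t. \<nu> t - nuE s \<tau> t) 0"
      by (intro DERIV_isconst_all) simp
    then show "\<nu> = nuE s \<tau>" using a by (auto simp: nuE_def fun_eq_iff)
  qed
  show ?thesis using that[OF dr hh nu[unfolded s_def]] p1[unfolded s_def] by blast
qed

lemma sin_ge_m: fixes m x :: real assumes "0 \<le> m" "m \<le> pi/2" "m \<le> x" "x \<le> pi - m"
  shows "sin m \<le> sin x"
proof (cases "x \<le> pi/2")
  case True then show ?thesis using assms by (intro sin_monotone_2pi_le) auto
next
  case False
  have "sin m \<le> sin (pi - x)" using assms False by (intro sin_monotone_2pi_le) auto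
  then show ?thesis by simp
qed

definition Nn :: "real \<Rightarrow> real \<Rightarrow> real \<Rightarrow> real" where
  "Nn c X Y = 1 - c\<^sup>2 - X\<^sup>2 - Y\<^sup>2 + 2 * c * X * Y"

lemma p2_Nn: "p2 f a b = Nn (cos (b - a)) (cos (f a)) (cos (f b)) / ((sin (b - a))\<^sup>2 * (sin (f a))\<^sup>2 * (sin (f b))\<^sup>2)"
  unfolding p2_def Nn_def by simp

lemma Nn_factor: fixes x y c :: real
  shows "Nn c (cos x) (cos y) = (cos (x - y) - c) * (c - cos (x + y))"
proof -
  have A: "(sin x)\<^sup>2 = 1 - (cos x)\<^sup>2" "(sin y)\<^sup>2 = 1 - (cos y)\<^sup>2" by (simp_all add: sin_squared_eq)
  have "(cos (x - y) - c) * (c - cos (x + y)) =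
     (cos x * cos y + sin x * sin y - c) * (c - (cos x * cos y - sin x * sin y))"
    by (simp add: cos_diff cos_add)
  also have "\<dots> = 2 * c * cos x * cos y - c\<^sup>2 - (cos x)\<^sup>2 * (cos y)\<^sup>2 + (sin x)\<^sup>2 * (sin y)\<^sup>2"
    by (simp add: algebra_simps power2_eq_square)
  also have "\<dots> = Nn c (cos x) (cos y)"
    unfolding A Nn_def by (simp add: algebra_simps power2_eq_square)
  finally show ?thesis by simp
qed

lemma Nn_h: fixes C a b \<tau> :: real
  shows "Nn (cos (b - a)) (C * cos (a - \<tau>)) (C * cos (b - \<tau>)) = (1 - C\<^sup>2) * (sin (b - a))\<^sup>2"
proof -
  define u where "u = a - \<tau>"
  define w where "w = b - \<tau>"
  have ba: "b - a = w - u" unfolding u_def w_def by simp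
  have cu: "(cos u)\<^sup>2 + (sin u)\<^sup>2 = 1" "(cos w)\<^sup>2 + (sin w)\<^sup>2 = 1" by simp_all
  show ?thesis unfolding ba u_def[symmetric] w_def[symmetric] Nn_def cos_diff sin_diff
    using cu by algebra
qed

lemma Nn_lip: fixes c X Y X' Y' :: real
  assumes "\<bar>c\<bar> \<le> 1" "\<bar>X\<bar> \<le> 1" "\<bar>Y\<bar> \<le> 1" "\<bar>X'\<bar> \<le> 1" "\<bar>Y'\<bar> \<le> 1"
  shows "\<bar>Nn c X Y - Nn c X' Y'\<bar> \<le> 4 * (\<bar>X - X'\<bar> + \<bar>Y - Y'\<bar>)"
proof -
  have e: "Nn c X Y - Nn c X' Y' = - ((X + X') * (X - X')) - ((Y + Y') * (Y - Y'))
      + 2 * c * (X * (Y - Y') + Y' * (X - X'))"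
    unfolding Nn_def by (simp add: algebra_simps power2_eq_square)
  have 1: "\<bar>(X + X') * (X - X')\<bar> \<le> 2 * \<bar>X - X'\<bar>"
    unfolding abs_mult using assms by (intro mult_right_mono) auto
  have 2: "\<bar>(Y + Y') * (Y - Y')\<bar> \<le> 2 * \<bar>Y - Y'\<bar>"
    unfolding abs_mult using assms by (intro mult_right_mono) auto
  have 3: "\<bar>X * (Y - Y')\<bar> \<le> \<bar>Y - Y'\<bar>"
    unfolding abs_mult using assms by (intro mult_left_le_one_le) auto
  have 4: "\<bar>Y' * (X - X')\<bar> \<le> \<bar>X - X'\<bar>"
    unfolding abs_mult using assms by (intro mult_left_le_one_le) auto
  have 5: "\<bar>2 * c * (X * (Y - Y') + Y' * (X - X'))\<bar> \<le> 2 * (\<bar>Y - Y'\<bar> + \<bar>X - X'\<bar>)"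
  proof -
    have "\<bar>2 * c * (X * (Y - Y') + Y' * (X - X'))\<bar> = 2 * \<bar>c\<bar> * \<bar>X * (Y - Y') + Y' * (X - X')\<bar>"
      by (simp add: abs_mult)
    also have "\<dots> \<le> 2 * 1 * (\<bar>Y - Y'\<bar> + \<bar>X - X'\<bar>)"
      using assms 3 4 abs_triangle_ineq[of "X * (Y - Y')" "Y' * (X - X')"]
      by (intro mult_mono) auto
    finally show ?thesis by simp
  qed
  have abs3: "\<bar>- A - B + C\<bar> \<le> 4 * (p + q)" if "\<bar>A\<bar> \<le> 2 * p" "\<bar>B\<bar> \<le> 2 * q" "\<bar>C\<bar> \<le> 2 * (q + p)" for A B C p q :: real
    using that by (simp add: abs_if split: if_splits)
  show ?thesis unfolding e by (rule abs3[OF 1 2 5])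
qed

lemma f_lip: assumes "f \<in> E_S1" shows "\<bar>f x - f y\<bar> \<le> \<bar>x - y\<bar>"
  using assms lipschitz_onD[of 1 UNIV f x y] unfolding E_S1_def by (simp add: dist_real_def)

lemma f_anti: assumes "f \<in> E_S1" shows "f (x + pi) = pi - f x"
proof -
  have "f (x + pi) + f x = pi" using assms unfolding E_S1_def by blast
  then show ?thesis by simp
qed

lemma p2_bounds:
  fixes f :: "real \<Rightarrow> real" and m a b :: real
  assumes f: "f \<in> E_S1" and ab: "a \<le> b" "b - a \<le> pi" and m: "0 < m" "m \<le> pi/2"
    and fm: "\<And>x. f x \<in> {m..pi - m}"
  shows "0 \<le> p2 f a b" "p2 f a b \<le> 1 / (sin m)^4"
proof -
  define x where "x = f a"
  define y where "y = f b"
  define t where "t = b - a"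
  have sm: "0 < sin m" using m by (intro sin_gt_zero) auto
  have "0 \<le> p2 f a b \<and> p2 f a b \<le> 1 / (sin m)^4"
  proof (cases "sin t = 0")
    case True then show ?thesis unfolding p2_def t_def using sm by simp
  next
    case False
    have t0: "0 \<le> t" "t \<le> pi" using ab unfolding t_def by auto
    have d1: "\<bar>x - y\<bar> \<le> t" using f_lip[OF f, of a b] ab unfolding x_def y_def t_def by simp
    have d2: "\<bar>y - (pi - x)\<bar> \<le> pi - t"
      using f_lip[OF f, of b "a + pi"] f_anti[OF f, of a] ab unfolding x_def y_def t_def by simp
    have P: "cos t \<le> cos (x - y)"
    proof -
      have "cos t \<le> cos \<bar>x - y\<bar>" using d1 t0 by (intro cos_monotone_0_pi_le) auto
      then show ?thesis by (simp add: abs_if split: if_splits) (metis cos_minus minus_diff_eq)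
    qed
    have Q: "cos (x + y) \<le> cos t"
    proof (cases "x + y \<le> pi")
      case True then show ?thesis using d2 t0 by (intro cos_monotone_0_pi_le) auto
    next
      case False
      have "cos (2 * pi - (x + y)) \<le> cos t" using d2 t0 False by (intro cos_monotone_0_pi_le) auto
      moreover have "cos (2 * pi - (x + y)) = cos (x + y)"
        by (simp add: cos_diff)
      ultimately show ?thesis by simp
    qed
    have N: "Nn (cos t) (cos x) (cos y) = (cos (x - y) - cos t) * (cos t - cos (x + y))"
      by (rule Nn_factor)
    have N0: "0 \<le> Nn (cos t) (cos x) (cos y)" unfolding N using P Q by simp
    have N1: "Nn (cos t) (cos x) (cos y) \<le> (1 - cos t) * (cos t + 1)"
      unfolding N using P Q by (intro mult_mono) auto
    have N2: "(1 - cos t) * (cos t + 1) = (sin t)\<^sup>2" by (simp add: sin_squared_eq algebra_simps power2_eq_square)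
    have sx: "sin m \<le> sin x" "sin m \<le> sin y" unfolding x_def y_def using fm m
      by (auto intro!: sin_ge_m)
    have st: "0 < (sin t)\<^sup>2" using False by simp
    have D0: "0 < (sin t)\<^sup>2 * (sin x)\<^sup>2 * (sin y)\<^sup>2" using st sx sm by simp
    have p2e: "p2 f a b = Nn (cos t) (cos x) (cos y) / ((sin t)\<^sup>2 * (sin x)\<^sup>2 * (sin y)\<^sup>2)"
      unfolding p2_Nn x_def y_def t_def ..
    have "p2 f a b \<le> (sin t)\<^sup>2 / ((sin t)\<^sup>2 * (sin x)\<^sup>2 * (sin y)\<^sup>2)"
      unfolding p2e using N1 N2 D0 by (intro divide_right_mono) auto
    also have "\<dots> = 1 / ((sin x)\<^sup>2 * (sin y)\<^sup>2)" using st by simp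
    also have "\<dots> \<le> 1 / ((sin m)\<^sup>2 * (sin m)\<^sup>2)"
      using sx sm by (intro divide_left_mono mult_mono power_mono) auto
    also have "\<dots> = 1 / (sin m)^4" by (simp add: power2_eq_square power4_eq_xxxx)
    finally show ?thesis unfolding p2e using N0 D0 by simp
  qed
  then show "0 \<le> p2 f a b" "p2 f a b \<le> 1 / (sin m)^4" by auto
qed

lemma p2_lower:
  fixes f :: "real \<Rightarrow> real" and a b :: real
  assumes "0 \<le> Nn (cos (b - a)) (cos (f a)) (cos (f b))" "sin (b - a) \<noteq> 0"
    "sin (f a) \<noteq> 0" "sin (f b) \<noteq> 0"
  shows "Nn (cos (b - a)) (cos (f a)) (cos (f b)) \<le> p2 f a b"
proof -
  have D0: "0 < (sin (b - a))\<^sup>2 * (sin (f a))\<^sup>2 * (sin (f b))\<^sup>2" using assms by simp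
  have D1: "(sin (b - a))\<^sup>2 * (sin (f a))\<^sup>2 * (sin (f b))\<^sup>2 \<le> 1"
    by (intro mult_le_one) (auto simp: abs_square_le_1)
  show ?thesis unfolding p2_Nn using assms(1) D0 D1
    by (simp add: le_divide_eq mult_left_le)
qed

lemma int_Icc: "integrable lborel (indicator {a..b::real} :: real \<Rightarrow> real)"
  by (rule integrable_real_indicator) (auto simp: emeasure_lborel_Icc_eq)

lemma integral_Icc: "(a::real) \<le> b \<Longrightarrow> integral\<^sup>L lborel (indicator {a..b} :: real \<Rightarrow> real) = b - a"
  by simp

lemma prod_int:
  fixes F G :: "real \<Rightarrow> real"
  assumes F: "integrable lborel F" and G: "integrable lborel G"
  shows "integrable (lborel \<Otimes>\<^sub>M lborel) (\<lambda>z. F (fst z) * G (snd z))"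
    "integral\<^sup>L (lborel \<Otimes>\<^sub>M lborel) (\<lambda>z. F (fst z) * G (snd z)) = integral\<^sup>L lborel F * integral\<^sup>L lborel G"
proof -
  have [measurable]: "F \<in> borel_measurable lborel" "G \<in> borel_measurable lborel" using F G by auto
  show I: "integrable (lborel \<Otimes>\<^sub>M lborel) (\<lambda>z. F (fst z) * G (snd z))"
  proof (rule lborel_pair.Fubini_integrable)
    show "(\<lambda>z. F (fst z) * G (snd z)) \<in> borel_measurable (lborel \<Otimes>\<^sub>M lborel)" by measurable
    have "integrable lborel (\<lambda>x. norm (F x) * (\<integral>y. norm (G y) \<partial>lborel))"
      using F by (intro integrable_mult_left integrable_norm)
    moreover have "\<And>x. (\<integral>y. norm (F (fst (x, y)) * G (snd (x, y))) \<partial>lborel) = norm (F x) * (\<integral>y. norm (G y) \<partial>lborel)"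
      by (simp add: abs_mult)
    ultimately show "integrable lborel (\<lambda>x. \<integral>y. norm (F (fst (x, y)) * G (snd (x, y))) \<partial>lborel)"
      by simp
    show "AE x in lborel. integrable lborel (\<lambda>y. F (fst (x, y)) * G (snd (x, y)))"
      using G by auto
  qed
  have "integral\<^sup>L (lborel \<Otimes>\<^sub>M lborel) (\<lambda>z. F (fst z) * G (snd z)) = (\<integral>x. \<integral>y. F x * G y \<partial>lborel \<partial>lborel)"
    using lborel_pair.integral_fst'[OF I] by simp
  also have "\<dots> = (\<integral>x. F x * integral\<^sup>L lborel G \<partial>lborel)" by simp
  also have "\<dots> = integral\<^sup>L lborel F * integral\<^sup>L lborel G" by simp
  finally show "integral\<^sup>L (lborel \<Otimes>\<^sub>M lborel) (\<lambda>z. F (fst z) * G (snd z)) = integral\<^sup>L lborel F * integral\<^sup>L lborel G" .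
qed

lemma int_dom:
  fixes h f :: "_ \<Rightarrow> real"
  assumes "integrable M f" "h \<in> borel_measurable M" "\<And>z. \<bar>h z\<bar> \<le> f z"
  shows "integrable M h"
proof (rule Bochner_Integration.integrable_bound[OF assms(1,2)])
  show "AE x in M. norm (h x) \<le> norm (f x)"
    using assms(3) by (auto intro: order_trans[OF _ abs_ge_self])
qed

lemma abs_le_1_sq: "\<bar>x::real\<bar> \<le> 1 + x\<^sup>2"
proof (cases "\<bar>x\<bar> \<le> 1")
  case True then show ?thesis by (smt (verit) zero_le_power2)
next
  case False
  then have "\<bar>x\<bar> * 1 \<le> \<bar>x\<bar> * \<bar>x\<bar>" by (intro mult_left_mono) auto
  then show ?thesis by (simp add: power2_eq_square abs_mult_self_eq)
qed

lemma sq_diff_le: "(x - y)\<^sup>2 \<le> 2 * x\<^sup>2 + 2 * (y::real)\<^sup>2"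
proof -
  have "0 \<le> (x + y)\<^sup>2" by simp
  then show ?thesis by (simp add: power2_eq_square algebra_simps)
qed

lemma quad_lower:
  fixes v :: "real \<Rightarrow> real" and K :: "real \<Rightarrow> real \<Rightarrow> real" and k0 e B \<delta> :: real
  assumes v: "v \<in> L2_0"
    and Km[measurable]: "(\<lambda>z. K (fst z) (snd z)) \<in> borel_measurable (lborel \<Otimes>\<^sub>M lborel)"
    and Kb: "\<And>a b. 0 \<le> a \<Longrightarrow> a \<le> b \<Longrightarrow> b \<le> pi \<Longrightarrow> \<bar>K a b\<bar> \<le> B"
    and Klow: "AE a in lborel. AE b in lborel. (0 \<le> a \<and> a \<le> b \<and> b \<le> pi \<longrightarrow>
        (if \<delta> \<le> b - a \<and> b - a \<le> pi - \<delta> then k0 else - e) \<le> K a b)"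
    and \<delta>: "\<delta> = pi / 64" and k0: "0 < k0" and e: "0 \<le> e" "e \<le> k0"
  shows "k0 / 2 * (L2norm v)\<^sup>2 \<le> (LBINT a:{0..pi}. (LBINT b:{a..pi}. K a b * (v b - v a)\<^sup>2))"
proof -
  have vm[measurable]: "v \<in> borel_measurable lborel" using v unfolding L2_0_def by blast
  have vsq: "integrable lborel (\<lambda>t. indicator {0..pi} t * (v t)\<^sup>2)"
    using v unfolding L2_0_def set_integrable_def by simp
  have v0: "integral\<^sup>L lborel (\<lambda>t. indicator {0..pi} t * v t) = 0"
    using v unfolding L2_0_def set_lebesgue_integral_def by simp
  have vint: "integrable lborel (\<lambda>t. indicator {0..pi} t * v t)"
  proof (rule int_dom[OF Bochner_Integration.integrable_add[OF int_Icc[of 0 pi] vsq]])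
    show "(\<lambda>t. indicator {0..pi} t * v t) \<in> borel_measurable lborel" by measurable
    fix t
    show "\<bar>indicator {0..pi} t * v t\<bar> \<le> indicator {0..pi} t + indicator {0..pi} t * (v t)\<^sup>2"
      using abs_le_1_sq[of "v t"] by (auto simp: indicator_def)
  qed
  define I where "I = integral\<^sup>L lborel (\<lambda>t. indicator {0..pi} t * (v t)\<^sup>2)"
  have I0: "0 \<le> I" unfolding I_def by (intro Bochner_Integration.integral_nonneg) (auto simp: indicator_def)
  have Lnorm: "(L2norm v)\<^sup>2 = pi * I"
    unfolding L2norm_def I_def set_lebesgue_integral_def using I0[unfolded I_def] by simp
  have \<delta>0: "0 < \<delta>" unfolding \<delta> by simp
  define g where "g = (\<lambda>z::real \<times> real. (v (snd z) - v (fst z))\<^sup>2)"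
  have gm[measurable]: "g \<in> borel_measurable (lborel \<Otimes>\<^sub>M lborel)" unfolding g_def by measurable
  have g0: "\<And>z. 0 \<le> g z" unfolding g_def by simp
  define Dm where "Dm = (\<lambda>z::real \<times> real. indicator {0..pi} (fst z) * (v (fst z))\<^sup>2 * indicator {0..pi} (snd z)
      + indicator {0..pi} (fst z) * (indicator {0..pi} (snd z) * (v (snd z))\<^sup>2))"
  have Dint: "integrable (lborel \<Otimes>\<^sub>M lborel) Dm"
    unfolding Dm_def by (intro Bochner_Integration.integrable_add prod_int(1)[OF vsq int_Icc] prod_int(1)[OF int_Icc vsq])
  have D0: "\<And>z. 0 \<le> Dm z" unfolding Dm_def by (auto simp: indicator_def)
  have gD: "g z \<le> 2 * Dm z" if "0 \<le> fst z" "fst z \<le> pi" "0 \<le> snd z" "snd z \<le> pi" for z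
    using that sq_diff_le[of "v (snd z)" "v (fst z)"] unfolding g_def Dm_def by (simp add: indicator_def)
  have D2int: "integrable (lborel \<Otimes>\<^sub>M lborel) (\<lambda>z. 2 * Dm z)"
    using Dint by (rule Bochner_Integration.integrable_mult_right)

  define fT where "fT = (\<lambda>z::real \<times> real. if 0 \<le> fst z \<and> fst z \<le> snd z \<and> snd z \<le> pi then g z else 0)"
  define fT' where "fT' = (\<lambda>z::real \<times> real. if 0 \<le> snd z \<and> snd z \<le> fst z \<and> fst z \<le> pi then g z else 0)"
  have fTm[measurable]: "fT \<in> borel_measurable (lborel \<Otimes>\<^sub>M lborel)" unfolding fT_def by measurable
  have fT'm[measurable]: "fT' \<in> borel_measurable (lborel \<Otimes>\<^sub>M lborel)" unfolding fT'_def by measurable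
  have fTint: "integrable (lborel \<Otimes>\<^sub>M lborel) fT"
  proof (rule int_dom[OF D2int fTm])
    fix z show "\<bar>fT z\<bar> \<le> 2 * Dm z" using gD[of z] g0[of z] D0[of z] unfolding fT_def by auto
  qed
  have fT'int: "integrable (lborel \<Otimes>\<^sub>M lborel) fT'"
  proof (rule int_dom[OF D2int fT'm])
    fix z show "\<bar>fT' z\<bar> \<le> 2 * Dm z" using gD[of z] g0[of z] D0[of z] unfolding fT'_def by auto
  qed
  have swap: "integral\<^sup>L (lborel \<Otimes>\<^sub>M lborel) fT' = integral\<^sup>L (lborel \<Otimes>\<^sub>M lborel) fT"
  proof -
    have "(\<lambda>(x, y). fT (y, x)) = fT'"
      by (auto simp: fun_eq_iff fT_def fT'_def g_def power2_commute)
    then show ?thesis using lborel_pair.integral_product_swap[OF fTm] by simp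
  qed
  have sumT: "fT z + fT' z = indicator {0..pi} (fst z) * (v (fst z))\<^sup>2 * indicator {0..pi} (snd z)
      + indicator {0..pi} (fst z) * (indicator {0..pi} (snd z) * (v (snd z))\<^sup>2)
      - 2 * (indicator {0..pi} (fst z) * v (fst z) * (indicator {0..pi} (snd z) * v (snd z)))" for z
  proof (cases "0 \<le> fst z \<and> fst z \<le> pi \<and> 0 \<le> snd z \<and> snd z \<le> pi")
    case True
    then have "fT z + fT' z = g z" unfolding fT_def fT'_def g_def by auto
    then show ?thesis using True unfolding g_def by (simp add: power2_eq_square algebra_simps)
  next
    case False then show ?thesis unfolding fT_def fT'_def by (auto simp: indicator_def)
  qed
  have QT: "integral\<^sup>L (lborel \<Otimes>\<^sub>M lborel) fT = pi * I"
  proof -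
    have i1: "integrable (lborel \<Otimes>\<^sub>M lborel) (\<lambda>z. indicator {0..pi} (fst z) * (v (fst z))\<^sup>2 * indicator {0..pi} (snd z))"
      by (rule prod_int(1)[OF vsq int_Icc])
    have i2: "integrable (lborel \<Otimes>\<^sub>M lborel) (\<lambda>z. indicator {0..pi} (fst z) * (indicator {0..pi} (snd z) * (v (snd z))\<^sup>2))"
      by (rule prod_int(1)[OF int_Icc vsq])
    have i3: "integrable (lborel \<Otimes>\<^sub>M lborel) (\<lambda>z. 2 * (indicator {0..pi} (fst z) * v (fst z) * (indicator {0..pi} (snd z) * v (snd z))))"
      by (intro Bochner_Integration.integrable_mult_right prod_int(1)[OF vint vint])
    have "integral\<^sup>L (lborel \<Otimes>\<^sub>M lborel) (\<lambda>z. fT z + fT' z) =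
       integral\<^sup>L (lborel \<Otimes>\<^sub>M lborel) (\<lambda>z. indicator {0..pi} (fst z) * (v (fst z))\<^sup>2 * indicator {0..pi} (snd z))
     + integral\<^sup>L (lborel \<Otimes>\<^sub>M lborel) (\<lambda>z. indicator {0..pi} (fst z) * (indicator {0..pi} (snd z) * (v (snd z))\<^sup>2))
     - integral\<^sup>L (lborel \<Otimes>\<^sub>M lborel) (\<lambda>z. 2 * (indicator {0..pi} (fst z) * v (fst z) * (indicator {0..pi} (snd z) * v (snd z))))"
      unfolding sumT using i1 i2 i3 by simp
    also have "\<dots> = I * pi + pi * I - 2 * (0 * 0)"
      using prod_int(2)[OF vsq int_Icc[of 0 pi]] prod_int(2)[OF int_Icc[of 0 pi] vsq] prod_int(2)[OF vint vint] v0
      unfolding I_def by simp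
    finally have "integral\<^sup>L (lborel \<Otimes>\<^sub>M lborel) fT + integral\<^sup>L (lborel \<Otimes>\<^sub>M lborel) fT' = 2 * pi * I"
      using fTint fT'int by simp
    then show ?thesis using swap by simp
  qed

  define fB where "fB = (\<lambda>z::real \<times> real. if (0 \<le> fst z \<and> fst z \<le> snd z \<and> snd z \<le> pi) \<and>
      \<not> (\<delta> \<le> snd z - fst z \<and> snd z - fst z \<le> pi - \<delta>) then g z else 0)"
  have fBm[measurable]: "fB \<in> borel_measurable (lborel \<Otimes>\<^sub>M lborel)" unfolding fB_def by measurable
  define W1 where "W1 = (\<lambda>z::real \<times> real. indicator {0..pi} (fst z) * (v (fst z))\<^sup>2 *
      ((if fst z - \<delta> \<le> snd z \<and> snd z \<le> fst z + \<delta> then 1 else 0) + indicator {pi - \<delta>..pi} (snd z)))"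
  define W2 where "W2 = (\<lambda>z::real \<times> real. indicator {0..pi} (snd z) * (v (snd z))\<^sup>2 *
      ((if snd z - \<delta> \<le> fst z \<and> fst z \<le> snd z + \<delta> then 1 else 0) + indicator {0..\<delta>} (fst z)))"
  have W1m[measurable]: "W1 \<in> borel_measurable (lborel \<Otimes>\<^sub>M lborel)" unfolding W1_def by measurable
  have W2m[measurable]: "W2 \<in> borel_measurable (lborel \<Otimes>\<^sub>M lborel)" unfolding W2_def by measurable
  have W10: "\<And>z. 0 \<le> W1 z" unfolding W1_def by (auto simp: indicator_def)
  have W20: "\<And>z. 0 \<le> W2 z" unfolding W2_def by (auto simp: indicator_def)
  have W1int: "integrable (lborel \<Otimes>\<^sub>M lborel) W1"
  proof (rule int_dom[OF Bochner_Integration.integrable_mult_right[OF prod_int(1)[OF vsq int_Icc[of "-\<delta>" "pi + \<delta>"]], of 2] W1m])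
    fix z :: "real \<times> real"
    have "((if fst z - \<delta> \<le> snd z \<and> snd z \<le> fst z + \<delta> then 1 else 0) + indicator {pi - \<delta>..pi} (snd z))
       \<le> 2 * (indicator {- \<delta>..pi + \<delta>} (snd z) :: real)" if "fst z \<in> {0..pi}"
      using that \<delta>0 by (auto simp: indicator_def)
    then show "\<bar>W1 z\<bar> \<le> 2 * (indicator {0..pi} (fst z) * (v (fst z))\<^sup>2 * indicator {- \<delta>..pi + \<delta>} (snd z))"
      using W10[of z] unfolding W1_def
      by (cases "fst z \<in> {0..pi}") (auto simp: indicator_def)
  qed
  have W2int: "integrable (lborel \<Otimes>\<^sub>M lborel) W2"
  proof (rule int_dom[OF Bochner_Integration.integrable_mult_right[OF prod_int(1)[OF int_Icc[of "-\<delta>" "pi + \<delta>"] vsq], of 2] W2m])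
    fix z :: "real \<times> real"
    have "((if snd z - \<delta> \<le> fst z \<and> fst z \<le> snd z + \<delta> then 1 else 0) + indicator {0..\<delta>} (fst z))
       \<le> 2 * (indicator {- \<delta>..pi + \<delta>} (fst z) :: real)" if "snd z \<in> {0..pi}"
      using that \<delta>0 \<delta> by (auto simp: indicator_def)
    then show "\<bar>W2 z\<bar> \<le> 2 * (indicator {- \<delta>..pi + \<delta>} (fst z) * (indicator {0..pi} (snd z) * (v (snd z))\<^sup>2))"
      using W20[of z] unfolding W2_def
      by (cases "snd z \<in> {0..pi}") (auto simp: indicator_def)
  qed
  have inner1: "(\<integral>y. W1 (x, y) \<partial>lborel) = indicator {0..pi} x * (v x)\<^sup>2 * (3 * \<delta>)" for x
  proof -
    have "(\<lambda>y. W1 (x, y)) = (\<lambda>y. indicator {0..pi} x * (v x)\<^sup>2 * (indicator {x - \<delta>..x + \<delta>} y + indicator {pi - \<delta>..pi} y))"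
      unfolding W1_def by (auto simp: indicator_def fun_eq_iff)
    then have "(\<integral>y. W1 (x, y) \<partial>lborel) = indicator {0..pi} x * (v x)\<^sup>2 *
        (integral\<^sup>L lborel (indicator {x - \<delta>..x + \<delta>}) + integral\<^sup>L lborel (indicator {pi - \<delta>..pi}))"
      using int_Icc by simp
    also have "\<dots> = indicator {0..pi} x * (v x)\<^sup>2 * (3 * \<delta>)"
      using \<delta>0 \<delta> by simp
    finally show ?thesis .
  qed
  have inner2: "(\<integral>x. W2 (x, y) \<partial>lborel) = indicator {0..pi} y * (v y)\<^sup>2 * (3 * \<delta>)" for y
  proof -
    have "(\<lambda>x. W2 (x, y)) = (\<lambda>x. indicator {0..pi} y * (v y)\<^sup>2 * (indicator {y - \<delta>..y + \<delta>} x + indicator {0..\<delta>} x))"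
      unfolding W2_def by (auto simp: indicator_def fun_eq_iff)
    then have "(\<integral>x. W2 (x, y) \<partial>lborel) = indicator {0..pi} y * (v y)\<^sup>2 *
        (integral\<^sup>L lborel (indicator {y - \<delta>..y + \<delta>}) + integral\<^sup>L lborel (indicator {0..\<delta>}))"
      using int_Icc by simp
    also have "\<dots> = indicator {0..pi} y * (v y)\<^sup>2 * (3 * \<delta>)"
      using \<delta>0 \<delta> by simp
    finally show ?thesis .
  qed
  have IW1: "integral\<^sup>L (lborel \<Otimes>\<^sub>M lborel) W1 = 3 * \<delta> * I"
  proof -
    have "integral\<^sup>L (lborel \<Otimes>\<^sub>M lborel) W1 = (\<integral>x. (\<integral>y. W1 (x, y) \<partial>lborel) \<partial>lborel)"
      using lborel_pair.integral_fst'[OF W1int] by simp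
    also have "\<dots> = (\<integral>x. indicator {0..pi} x * (v x)\<^sup>2 * (3 * \<delta>) \<partial>lborel)" unfolding inner1 ..
    also have "\<dots> = 3 * \<delta> * I" unfolding I_def by simp
    finally show ?thesis .
  qed
  have IW2: "integral\<^sup>L (lborel \<Otimes>\<^sub>M lborel) W2 = 3 * \<delta> * I"
  proof -
    have W2c: "integrable (lborel \<Otimes>\<^sub>M lborel) (case_prod (\<lambda>x y. W2 (x, y)))" using W2int by simp
    have "integral\<^sup>L (lborel \<Otimes>\<^sub>M lborel) W2 = (\<integral>x. (\<integral>y. W2 (x, y) \<partial>lborel) \<partial>lborel)"
      using lborel_pair.integral_fst'[OF W2int] by simp
    also have "\<dots> = (\<integral>y. (\<integral>x. W2 (x, y) \<partial>lborel) \<partial>lborel)"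
      using lborel_pair.Fubini_integral[OF W2c] by simp
    also have "\<dots> = (\<integral>y. indicator {0..pi} y * (v y)\<^sup>2 * (3 * \<delta>) \<partial>lborel)" unfolding inner2 ..
    also have "\<dots> = 3 * \<delta> * I" unfolding I_def by simp
    finally show ?thesis .
  qed
  have fBW: "\<bar>fB z\<bar> \<le> 2 * W1 z + 2 * W2 z" for z
  proof (cases "(0 \<le> fst z \<and> fst z \<le> snd z \<and> snd z \<le> pi) \<and> \<not> (\<delta> \<le> snd z - fst z \<and> snd z - fst z \<le> pi - \<delta>)")
    case True
    then have c: "0 \<le> fst z" "fst z \<le> snd z" "snd z \<le> pi" "snd z - fst z < \<delta> \<or> snd z - fst z > pi - \<delta>" by auto
    have "(v (fst z))\<^sup>2 \<le> W1 z"
    proof -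
      have "1 \<le> ((if fst z - \<delta> \<le> snd z \<and> snd z \<le> fst z + \<delta> then 1 else 0) + indicator {pi - \<delta>..pi} (snd z) :: real)"
        using c \<delta>0 by (auto simp: indicator_def)
      then have "(v (fst z))\<^sup>2 * 1 \<le> (v (fst z))\<^sup>2 * ((if fst z - \<delta> \<le> snd z \<and> snd z \<le> fst z + \<delta> then 1 else 0) + indicator {pi - \<delta>..pi} (snd z))"
        by (intro mult_left_mono) auto
      then show ?thesis using c unfolding W1_def by (simp add: indicator_def)
    qed
    moreover have "(v (snd z))\<^sup>2 \<le> W2 z"
    proof -
      have "1 \<le> ((if snd z - \<delta> \<le> fst z \<and> fst z \<le> snd z + \<delta> then 1 else 0) + indicator {0..\<delta>} (fst z) :: real)"
        using c \<delta>0 by (auto simp: indicator_def)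
      then have "(v (snd z))\<^sup>2 * 1 \<le> (v (snd z))\<^sup>2 * ((if snd z - \<delta> \<le> fst z \<and> fst z \<le> snd z + \<delta> then 1 else 0) + indicator {0..\<delta>} (fst z))"
        by (intro mult_left_mono) auto
      then show ?thesis using c unfolding W2_def by (simp add: indicator_def)
    qed
    moreover have "fB z = g z" using True unfolding fB_def by simp
    ultimately show ?thesis using sq_diff_le[of "v (snd z)" "v (fst z)"] g0[of z] unfolding g_def by simp
  next
    case False
    then have "fB z = 0" unfolding fB_def by (simp only: if_False)
    then show ?thesis using W10[of z] W20[of z] by simp
  qed
  have fBint: "integrable (lborel \<Otimes>\<^sub>M lborel) fB"
    by (rule int_dom[OF _ fBm fBW]) (intro Bochner_Integration.integrable_add Bochner_Integration.integrable_mult_right W1int W2int)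
  have QB: "integral\<^sup>L (lborel \<Otimes>\<^sub>M lborel) fB \<le> 12 * \<delta> * I"
  proof -
    have "integral\<^sup>L (lborel \<Otimes>\<^sub>M lborel) fB \<le> integral\<^sup>L (lborel \<Otimes>\<^sub>M lborel) (\<lambda>z. 2 * W1 z + 2 * W2 z)"
      using fBint W1int W2int fBW by (intro integral_mono) (auto intro: order_trans[OF abs_ge_self])
    also have "\<dots> = 12 * \<delta> * I" using W1int W2int IW1 IW2 by simp
    finally show ?thesis .
  qed
  have QB0: "0 \<le> integral\<^sup>L (lborel \<Otimes>\<^sub>M lborel) fB"
    by (intro Bochner_Integration.integral_nonneg) (auto simp: fB_def g0)
  define fK where "fK = (\<lambda>z::real \<times> real. if 0 \<le> fst z \<and> fst z \<le> snd z \<and> snd z \<le> pi then K (fst z) (snd z) * g z else 0)"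
  have fKm[measurable]: "fK \<in> borel_measurable (lborel \<Otimes>\<^sub>M lborel)" unfolding fK_def by measurable
  have B0: "0 \<le> B" using Kb[of 0 0] by simp
  have fKint: "integrable (lborel \<Otimes>\<^sub>M lborel) fK"
  proof (rule int_dom[OF Bochner_Integration.integrable_mult_right[OF D2int, of B] fKm])
    fix z :: "real \<times> real"
    show "\<bar>fK z\<bar> \<le> B * (2 * Dm z)"
    proof (cases "0 \<le> fst z \<and> fst z \<le> snd z \<and> snd z \<le> pi")
      case True
      then have "\<bar>fK z\<bar> = \<bar>K (fst z) (snd z)\<bar> * g z" unfolding fK_def using g0[of z] by (simp add: abs_mult)
      also have "\<dots> \<le> B * (2 * Dm z)"
        using True Kb[of "fst z" "snd z"] gD[of z] g0[of z] B0 by (intro mult_mono) auto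
      finally show ?thesis .
    next
      case False
      then have "fK z = 0" unfolding fK_def by (simp only: if_False)
      then show ?thesis using B0 D0[of z] by simp
    qed
  qed
  define fL where "fL = (\<lambda>z. k0 * fT z - (k0 + e) * fB z)"
  have fLint: "integrable (lborel \<Otimes>\<^sub>M lborel) fL"
    unfolding fL_def using fTint fBint by simp
  have AEP: "AE z in lborel \<Otimes>\<^sub>M lborel. (0 \<le> fst z \<and> fst z \<le> snd z \<and> snd z \<le> pi \<longrightarrow>
        (if \<delta> \<le> snd z - fst z \<and> snd z - fst z \<le> pi - \<delta> then k0 else - e) \<le> K (fst z) (snd z))"
  proof (rule lborel_pair.AE_pair_measure)
    show "{x \<in> space (lborel \<Otimes>\<^sub>M lborel). (0 \<le> fst x \<and> fst x \<le> snd x \<and> snd x \<le> pi \<longrightarrow>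
        (if \<delta> \<le> snd x - fst x \<and> snd x - fst x \<le> pi - \<delta> then k0 else - e) \<le> K (fst x) (snd x))}
        \<in> sets (lborel \<Otimes>\<^sub>M lborel)" by measurable
    show "AE x in lborel. AE y in lborel. (0 \<le> fst (x, y) \<and> fst (x, y) \<le> snd (x, y) \<and> snd (x, y) \<le> pi \<longrightarrow>
        (if \<delta> \<le> snd (x, y) - fst (x, y) \<and> snd (x, y) - fst (x, y) \<le> pi - \<delta> then k0 else - e) \<le> K (fst (x, y)) (snd (x, y)))"
      using Klow by simp
  qed
  have AEL: "AE z in lborel \<Otimes>\<^sub>M lborel. fL z \<le> fK z"
  proof (rule AE_mp[OF AEP], intro AE_I2 impI)
    fix z :: "real \<times> real"
    assume P: "0 \<le> fst z \<and> fst z \<le> snd z \<and> snd z \<le> pi \<longrightarrow>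
        (if \<delta> \<le> snd z - fst z \<and> snd z - fst z \<le> pi - \<delta> then k0 else - e) \<le> K (fst z) (snd z)"
    show "fL z \<le> fK z"
    proof (cases "0 \<le> fst z \<and> fst z \<le> snd z \<and> snd z \<le> pi")
      case T: True
      show ?thesis
      proof (cases "\<delta> \<le> snd z - fst z \<and> snd z - fst z \<le> pi - \<delta>")
        case True
        then have "fL z = k0 * g z" "fK z = K (fst z) (snd z) * g z" "k0 \<le> K (fst z) (snd z)"
          using T P unfolding fL_def fK_def fT_def fB_def by auto
        then show ?thesis using g0[of z] by (simp add: mult_right_mono)
      next
        case False
        then have "fL z = - e * g z" "fK z = K (fst z) (snd z) * g z" "- e \<le> K (fst z) (snd z)"
          using T P unfolding fL_def fK_def fT_def fB_def by (auto simp: algebra_simps)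
        moreover have "- e * g z \<le> K (fst z) (snd z) * g z"
          using calculation(3) g0[of z] by (rule mult_right_mono)
        ultimately show ?thesis by simp
      qed
    next
      case False
      then have "fT z = 0" "fB z = 0" "fK z = 0" unfolding fT_def fB_def fK_def by (simp_all only: if_False simp_thms)
      then show ?thesis unfolding fL_def by simp
    qed
  qed
  have mono: "integral\<^sup>L (lborel \<Otimes>\<^sub>M lborel) fL \<le> integral\<^sup>L (lborel \<Otimes>\<^sub>M lborel) fK"
    by (rule integral_mono_AE[OF fLint fKint AEL])
  have IL: "integral\<^sup>L (lborel \<Otimes>\<^sub>M lborel) fL = k0 * (pi * I) - (k0 + e) * integral\<^sup>L (lborel \<Otimes>\<^sub>M lborel) fB"
    unfolding fL_def using fTint fBint QT by simp
  have LHS: "(LBINT a:{0..pi}. (LBINT b:{a..pi}. K a b * (v b - v a)\<^sup>2)) = integral\<^sup>L (lborel \<Otimes>\<^sub>M lborel) fK"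
  proof -
    have "(LBINT a:{0..pi}. (LBINT b:{a..pi}. K a b * (v b - v a)\<^sup>2)) = (\<integral>a. (\<integral>b. fK (a, b) \<partial>lborel) \<partial>lborel)"
      unfolding set_lebesgue_integral_def
    proof (rule Bochner_Integration.integral_cong[OF refl])
      fix a :: real
      have "(\<lambda>b. fK (a, b)) = (\<lambda>b. indicator {0..pi} a * (indicator {a..pi} b * (K a b * (v b - v a)\<^sup>2)))"
        by (auto simp: fun_eq_iff fK_def g_def indicator_def)
      then show "indicator {0..pi} a *\<^sub>R (\<integral>b. indicator {a..pi} b *\<^sub>R (K a b * (v b - v a)\<^sup>2) \<partial>lborel) = (\<integral>b. fK (a, b) \<partial>lborel)"
        by simp
    qed
    also have "\<dots> = integral\<^sup>L (lborel \<Otimes>\<^sub>M lborel) fK" using lborel_pair.integral_fst'[OF fKint] by simp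
    finally show ?thesis .
  qed
  have m1: "(k0 + e) * integral\<^sup>L (lborel \<Otimes>\<^sub>M lborel) fB \<le> (2 * k0) * (12 * \<delta> * I)"
    using QB QB0 e k0 by (intro mult_mono) auto
  have m2: "(2 * k0) * (12 * \<delta> * I) = 3 / 8 * (k0 * (pi * I))" unfolding \<delta> by simp
  have m3: "0 \<le> k0 * (pi * I)" using k0 I0 by simp
  show ?thesis unfolding LHS Lnorm using mono IL m1 m2 m3 by simp
qed

lemma cos_lip: fixes x y :: real shows "\<bar>cos x - cos y\<bar> \<le> \<bar>x - y\<bar>"
proof -
  have *: "\<bar>cos b - cos a\<bar> \<le> b - a" if "a \<le> b" for a b :: real
  proof -
    have d: "\<And>t. (cos has_real_derivative - sin t) (at t)" by simp
    have b1: "\<And>t::real. -1 \<le> - sin t" by simp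
    have b2: "\<And>t::real. - sin t \<le> 1" using sin_ge_minus_one by (simp add: minus_le_iff)
    from deriv_bounds[OF d b1 b2 that] show ?thesis by simp
  qed
  show ?thesis using *[of x y] *[of y x] by (cases "x \<le> y") (auto simp: abs_minus_commute)
qed

lemma sin_lower: fixes x y :: real assumes "0 \<le> x" "x \<le> pi" "\<bar>y\<bar> \<le> pi/2"
  shows "- \<bar>y\<bar> \<le> sin (x + y)"
proof -
  have "0 \<le> sin x" using assms by (intro sin_ge_zero) auto
  moreover have "0 \<le> cos y" using assms by (intro cos_ge_zero) auto
  ultimately have 1: "0 \<le> sin x * cos y" by simp
  have "\<bar>cos x\<bar> * \<bar>sin y\<bar> \<le> 1 * \<bar>y\<bar>" using abs_sin_x_le_abs_x[of y] by (intro mult_mono) auto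
  then have "\<bar>cos x * sin y\<bar> \<le> \<bar>y\<bar>" by (simp add: abs_mult)
  then show ?thesis unfolding sin_add using 1 by linarith
qed

theorem lemma4p7:
  fixes r :: real
  assumes "0 < r" and "r < pi / 2"
  shows "\<exists>\<epsilon>>0. \<exists>c>0. \<forall>h \<eta> f.
     h \<in> S2_plus \<inter> E_r r \<longrightarrow> \<eta> \<in> L2_0 \<longrightarrow> f \<in> E_S1 \<longrightarrow>
     (\<forall>a. \<bar>f a - h a\<bar> \<le> \<epsilon>) \<longrightarrow> (AE t in lborel. \<bar>\<eta> t\<bar> \<le> \<epsilon>) \<longrightarrow>
     (\<forall>v \<in> L2_0.
        (LBINT a:{0..pi}. (LBINT b:{a..pi}.
            p2 f a b * sin ((nu h b - nu h a) + (\<eta> b - \<eta> a)) * (v b - v a)\<^sup>2))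
        \<ge> c * (L2norm v)\<^sup>2)"
proof -
  define \<delta> where "\<delta> = pi / 64"
  define \<sigma> where "\<sigma> = sin \<delta>"
  define s0 where "s0 = sin r"
  define m where "m = r / 2"
  define M1 where "M1 = 1 / (sin m)^4"
  define k1 where "k1 = s0\<^sup>2 * \<sigma>\<^sup>2 / 2"
  define k2 where "k2 = sin (s0 * \<delta> / 2)"
  define k0 where "k0 = k1 * k2"
  define \<epsilon> where "\<epsilon> = min (r/2) (min (k1/8) (min (s0 * \<delta> / 4) (k0 / (2 * M1))))"
  have \<delta>0: "0 < \<delta>" "\<delta> \<le> pi / 2" unfolding \<delta>_def by auto
  have \<sigma>0: "0 < \<sigma>" unfolding \<sigma>_def using \<delta>0 by (intro sin_gt_zero) auto
  have s00: "0 < s0" "s0 \<le> 1" unfolding s0_def using assms by (auto intro!: sin_gt_zero)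
  have m0: "0 < m" "m \<le> pi / 2" unfolding m_def using assms by auto
  have sm: "0 < sin m" using m0 by (intro sin_gt_zero) auto
  have M10: "0 < M1" unfolding M1_def using sm by simp
  have k10: "0 < k1" unfolding k1_def using s00 \<sigma>0 by simp
  have sd: "0 < s0 * \<delta> / 2" "s0 * \<delta> / 2 \<le> pi / 2"
  proof -
    show "0 < s0 * \<delta> / 2" using s00 \<delta>0 by simp
    have "s0 * \<delta> \<le> 1 * \<delta>" using s00 \<delta>0 by (intro mult_right_mono) auto
    then show "s0 * \<delta> / 2 \<le> pi / 2" using \<delta>0 unfolding \<delta>_def by simp
  qed
  have k20: "0 < k2" unfolding k2_def using sd by (intro sin_gt_zero) auto
  have k00: "0 < k0" unfolding k0_def using k10 k20 by simp
  have \<epsilon>0: "0 < \<epsilon>" unfolding \<epsilon>_def using assms k10 s00 \<delta>0 k00 M10 by simp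
  have \<epsilon>1: "\<epsilon> \<le> r/2" "\<epsilon> \<le> k1/8" "\<epsilon> \<le> s0 * \<delta> / 4" "\<epsilon> \<le> k0 / (2 * M1)" unfolding \<epsilon>_def by auto
  define e where "e = 2 * \<epsilon> * M1"
  have e0: "0 \<le> e" "e \<le> k0" unfolding e_def using \<epsilon>0 M10 \<epsilon>1(4) by (auto simp: field_simps)
  have main: "k0 / 2 * (L2norm v)\<^sup>2 \<le> (LBINT a:{0..pi}. (LBINT b:{a..pi}.
            p2 f a b * sin ((nu h b - nu h a) + (\<eta> b - \<eta> a)) * (v b - v a)\<^sup>2))"
    if hH: "h \<in> S2_plus \<inter> E_r r" and \<eta>L: "\<eta> \<in> L2_0" and fE: "f \<in> E_S1"
      and fh: "\<forall>a. \<bar>f a - h a\<bar> \<le> \<epsilon>" and \<eta>AE: "AE t in lborel. \<bar>\<eta> t\<bar> \<le> \<epsilon>" and vL: "v \<in> L2_0"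
    for h \<eta> f v
  proof -
    obtain \<tau> d where d: "d \<in> {r..pi/2}" and hh: "h = (\<lambda>a. arccos (cos d * cos (a - \<tau>)))"
      and nuh: "nu h = nuE (sin d) \<tau>"
      using h_facts[OF assms hH] by blast
    define s where "s = sin d"
    have ss0: "s0 \<le> s" unfolding s_def s0_def using d assms by (intro sin_monotone_2pi_le) auto
    have s1: "0 < s" "s \<le> 1" using ss0 s00 unfolding s_def by auto
    have hE: "\<And>x. h x \<in> {r..pi - r}" using hH unfolding E_r_def by blast
    have fm: "\<And>x. f x \<in> {m..pi - m}"
    proof -
      fix x
      have "\<bar>f x - h x\<bar> \<le> \<epsilon>" using fh by blast
      then show "f x \<in> {m..pi - m}" using hE[of x] \<epsilon>1(1) unfolding m_def by (auto simp: abs_le_iff)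
    qed
    have fcont: "continuous_on UNIV f"
      using fE unfolding E_S1_def by (auto intro: lipschitz_on_continuous_on)
    have fmeas[measurable]: "f \<in> borel_measurable lborel"
      using borel_measurable_continuous_onI[OF fcont] by simp
    have \<eta>meas[measurable]: "\<eta> \<in> borel_measurable lborel" using \<eta>L unfolding L2_0_def by blast
    define \<nu> where "\<nu> = nuE s \<tau>"
    have nuh': "nu h = \<nu>" unfolding \<nu>_def s_def nuh ..
    have \<nu>d: "\<And>t. (\<nu> has_real_derivative s / (s\<^sup>2 * (cos (t - \<tau>))\<^sup>2 + (sin (t - \<tau>))\<^sup>2)) (at t)"
      unfolding \<nu>_def by (rule nuE_deriv[OF s1])
    have \<nu>cont: "continuous_on UNIV \<nu>"
      by (rule continuous_at_imp_continuous_on) (use \<nu>d DERIV_continuous in blast)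
    have \<nu>meas[measurable]: "\<nu> \<in> borel_measurable lborel"
      using borel_measurable_continuous_onI[OF \<nu>cont] by simp
    have \<nu>per: "\<And>t. \<nu> (t + pi) = \<nu> t + pi"
    proof -
      fix t
      have "Gf s (t + pi - \<tau>) = Gf s (t - \<tau>) + pi" using Gf_period[of s "t - \<tau>"] by (simp add: algebra_simps)
      then show "\<nu> (t + pi) = \<nu> t + pi" unfolding \<nu>_def nuE_def by simp
    qed
    have pb1: "\<And>t. s \<le> s / (s\<^sup>2 * (cos (t - \<tau>))\<^sup>2 + (sin (t - \<tau>))\<^sup>2)"
    proof -
      fix t
      have E: "s\<^sup>2 \<le> s\<^sup>2 * (cos (t - \<tau>))\<^sup>2 + (sin (t - \<tau>))\<^sup>2" "s\<^sup>2 * (cos (t - \<tau>))\<^sup>2 + (sin (t - \<tau>))\<^sup>2 \<le> 1"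
        using Eden_bounds[OF s1] by auto
      have "0 < s\<^sup>2" using s1 by simp
      then have "0 < s\<^sup>2 * (cos (t - \<tau>))\<^sup>2 + (sin (t - \<tau>))\<^sup>2" using E by linarith
      then have "s / 1 \<le> s / (s\<^sup>2 * (cos (t - \<tau>))\<^sup>2 + (sin (t - \<tau>))\<^sup>2)"
        using E s1 by (intro divide_left_mono) auto
      then show "s \<le> s / (s\<^sup>2 * (cos (t - \<tau>))\<^sup>2 + (sin (t - \<tau>))\<^sup>2)" by simp
    qed
    have pb2: "\<And>t. s / (s\<^sup>2 * (cos (t - \<tau>))\<^sup>2 + (sin (t - \<tau>))\<^sup>2) \<le> 1 / s"
    proof -
      fix t
      have E: "s\<^sup>2 \<le> s\<^sup>2 * (cos (t - \<tau>))\<^sup>2 + (sin (t - \<tau>))\<^sup>2"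
        using Eden_bounds[OF s1] by auto
      have "0 < s\<^sup>2" using s1 by simp
      moreover have "0 < s\<^sup>2 * (cos (t - \<tau>))\<^sup>2 + (sin (t - \<tau>))\<^sup>2" using E calculation by linarith
      ultimately have "s / (s\<^sup>2 * (cos (t - \<tau>))\<^sup>2 + (sin (t - \<tau>))\<^sup>2) \<le> s / s\<^sup>2"
        using E s1 by (intro divide_left_mono) auto
      then show "s / (s\<^sup>2 * (cos (t - \<tau>))\<^sup>2 + (sin (t - \<tau>))\<^sup>2) \<le> 1 / s" using s1 by (simp add: power2_eq_square)
    qed
    have \<nu>inc: "\<And>a b. a \<le> b \<Longrightarrow> s * (b - a) \<le> \<nu> b - \<nu> a"
      using deriv_bounds(1)[OF \<nu>d pb1 pb2] by blast
    have \<nu>up: "\<nu> b - \<nu> a \<le> pi - s * (pi - (b - a))" if "a \<le> b" "b - a \<le> pi" for a b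
      using \<nu>inc[of b "a + pi"] that \<nu>per[of a] by (simp add: algebra_simps)
    have Km: "(\<lambda>z. p2 f (fst z) (snd z) * sin ((nu h (snd z) - nu h (fst z)) + (\<eta> (snd z) - \<eta> (fst z))))
        \<in> borel_measurable (lborel \<Otimes>\<^sub>M lborel)"
      unfolding nuh' p2_def by measurable
    have Kb: "\<bar>p2 f a b * sin ((nu h b - nu h a) + (\<eta> b - \<eta> a))\<bar> \<le> M1"
      if "0 \<le> a" "a \<le> b" "b \<le> pi" for a b
    proof -
      have "0 \<le> p2 f a b" "p2 f a b \<le> M1"
        using p2_bounds[OF fE that(2) _ m0 fm] that unfolding M1_def by auto
      then have "\<bar>p2 f a b\<bar> * \<bar>sin ((nu h b - nu h a) + (\<eta> b - \<eta> a))\<bar> \<le> M1 * 1"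
        by (intro mult_mono) auto
      then show ?thesis by (simp add: abs_mult)
    qed
    have pt: "(if \<delta> \<le> b - a \<and> b - a \<le> pi - \<delta> then k0 else - e) \<le> p2 f a b * sin ((nu h b - nu h a) + (\<eta> b - \<eta> a))"
      if ha: "\<bar>\<eta> a\<bar> \<le> \<epsilon>" and hb: "\<bar>\<eta> b\<bar> \<le> \<epsilon>" and ab: "0 \<le> a" "a \<le> b" "b \<le> pi" for a b
    proof -
      define t where "t = b - a"
      define D where "D = \<nu> b - \<nu> a"
      define y where "y = \<eta> b - \<eta> a"
      have t0: "0 \<le> t" "t \<le> pi" unfolding t_def using ab by auto
      have y2: "\<bar>y\<bar> \<le> 2 * \<epsilon>" unfolding y_def using ha hb by simp
      have D1: "s * t \<le> D" unfolding D_def t_def using \<nu>inc ab by simp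
      have D2: "D \<le> pi - s * (pi - t)" unfolding D_def t_def using \<nu>up ab by simp
      have st0: "0 \<le> s * t" "0 \<le> s * (pi - t)" using s1 t0 by auto
      have p0: "0 \<le> p2 f a b" "p2 f a b \<le> M1"
        using p2_bounds[OF fE ab(2) _ m0 fm] ab unfolding M1_def by auto
      have K: "p2 f a b * sin ((nu h b - nu h a) + (\<eta> b - \<eta> a)) = p2 f a b * sin (D + y)"
        unfolding nuh' D_def y_def ..
      show ?thesis
      proof (cases "\<delta> \<le> b - a \<and> b - a \<le> pi - \<delta>")
        case True
        then have tm: "\<delta> \<le> t" "t \<le> pi - \<delta>" unfolding t_def by auto
        have "s0 * \<delta> \<le> s * t" using ss0 s00 tm \<delta>0 by (intro mult_mono) auto
        moreover have "s0 * \<delta> \<le> s * (pi - t)" using ss0 s00 tm \<delta>0 by (intro mult_mono) auto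
        ultimately have Dy: "s0 * \<delta> / 2 \<le> D + y" "D + y \<le> pi - s0 * \<delta> / 2"
          using D1 D2 y2 \<epsilon>1(3) by (auto simp: abs_le_iff)
        have sin2: "k2 \<le> sin (D + y)" unfolding k2_def using sd Dy by (intro sin_ge_m) auto
        have sint: "\<sigma> \<le> sin t" unfolding \<sigma>_def using \<delta>0 tm by (intro sin_ge_m) auto
        have ch: "cos (h x) = cos d * cos (x - \<tau>)" for x
        proof -
          have "\<bar>cos d * cos (x - \<tau>)\<bar> \<le> 1" by (simp add: abs_mult mult_le_one)
          then show ?thesis unfolding hh by (simp add: abs_le_iff)
        qed
        have Nh: "Nn (cos t) (cos (h a)) (cos (h b)) = s\<^sup>2 * (sin t)\<^sup>2"
          unfolding ch t_def Nn_h s_def by (simp add: cos_squared_eq)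
        have Ndiff: "\<bar>Nn (cos t) (cos (f a)) (cos (f b)) - Nn (cos t) (cos (h a)) (cos (h b))\<bar> \<le> 4 * (\<epsilon> + \<epsilon>)"
        proof -
          have "\<bar>Nn (cos t) (cos (f a)) (cos (f b)) - Nn (cos t) (cos (h a)) (cos (h b))\<bar>
              \<le> 4 * (\<bar>cos (f a) - cos (h a)\<bar> + \<bar>cos (f b) - cos (h b)\<bar>)"
            by (rule Nn_lip) auto
          also have "\<dots> \<le> 4 * (\<epsilon> + \<epsilon>)"
            using cos_lip[of "f a" "h a"] cos_lip[of "f b" "h b"] fh by (smt (verit))
          finally show ?thesis .
        qed
        have "s0\<^sup>2 * \<sigma>\<^sup>2 \<le> s\<^sup>2 * (sin t)\<^sup>2"
          using ss0 s00 sint \<sigma>0 by (intro mult_mono power_mono) auto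
        then have Nf: "k1 \<le> Nn (cos t) (cos (f a)) (cos (f b))"
          using Nh Ndiff \<epsilon>1(2) unfolding k1_def by (auto simp: abs_le_iff)
        have sfa: "sin (f a) \<noteq> 0" "sin (f b) \<noteq> 0"
          using sin_ge_m[of m "f a"] sin_ge_m[of m "f b"] fm[of a] fm[of b] m0 sm by auto
        have sint0: "sin (b - a) \<noteq> 0" using sint \<sigma>0 unfolding t_def by auto
        have p2k: "k1 \<le> p2 f a b"
          using p2_lower[where f=f and a=a and b=b] Nf k10 sfa sint0 unfolding t_def by auto
        have "k1 * k2 \<le> p2 f a b * sin (D + y)"
          using p2k sin2 k20 p0 by (intro mult_mono) auto
        then show ?thesis using True unfolding K k0_def by simp
      next
        case False
        have D0: "0 \<le> D" "D \<le> pi" using D1 D2 st0 by auto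
        have ypi: "\<bar>y\<bar> \<le> pi / 2" using y2 \<epsilon>1(3) sd by simp
        have "- (2 * \<epsilon>) \<le> sin (D + y)" using sin_lower[OF D0 ypi] y2 by simp
        then have "p2 f a b * (- (2 * \<epsilon>)) \<le> p2 f a b * sin (D + y)"
          using p0 by (intro mult_left_mono) auto
        moreover have "M1 * (- (2 * \<epsilon>)) \<le> p2 f a b * (- (2 * \<epsilon>))"
          using p0 \<epsilon>0 by (intro mult_right_mono_neg) auto
        ultimately have A: "M1 * (- (2 * \<epsilon>)) \<le> p2 f a b * sin (D + y)" by linarith
        have "- e = M1 * (- (2 * \<epsilon>))" unfolding e_def by (simp add: algebra_simps)
        then show ?thesis unfolding K if_not_P[OF False] using A by simp
      qed
    qed
    have Klow: "AE a in lborel. AE b in lborel. (0 \<le> a \<and> a \<le> b \<and> b \<le> pi \<longrightarrow>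
        (if \<delta> \<le> b - a \<and> b - a \<le> pi - \<delta> then k0 else - e) \<le> p2 f a b * sin ((nu h b - nu h a) + (\<eta> b - \<eta> a)))"
    proof (rule AE_mp[OF \<eta>AE], rule AE_I2, rule impI)
      fix a assume ha: "\<bar>\<eta> a\<bar> \<le> \<epsilon>"
      show "AE b in lborel. (0 \<le> a \<and> a \<le> b \<and> b \<le> pi \<longrightarrow>
        (if \<delta> \<le> b - a \<and> b - a \<le> pi - \<delta> then k0 else - e) \<le> p2 f a b * sin ((nu h b - nu h a) + (\<eta> b - \<eta> a)))"
      proof (rule AE_mp[OF \<eta>AE], rule AE_I2, rule impI)
        fix b assume hb: "\<bar>\<eta> b\<bar> \<le> \<epsilon>"
        show "0 \<le> a \<and> a \<le> b \<and> b \<le> pi \<longrightarrow>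
          (if \<delta> \<le> b - a \<and> b - a \<le> pi - \<delta> then k0 else - e) \<le> p2 f a b * sin ((nu h b - nu h a) + (\<eta> b - \<eta> a))"
          using pt[OF ha hb] by blast
      qed
    qed
    show ?thesis
      by (rule quad_lower[where K = "\<lambda>a b. p2 f a b * sin ((nu h b - nu h a) + (\<eta> b - \<eta> a))",
            OF vL Km Kb Klow \<delta>_def k00 e0])
  qed
  show ?thesis
    using \<epsilon>0 k00 main by (intro exI[of _ \<epsilon>] conjI exI[of _ "k0 / 2"]) auto
qed


end
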